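(* Let $1\le k\le n$ be integers, let $M\in\mathbb{R}^{2n\times 2n}$ be symmetric positive definite, let $N=\operatorname{diag}(\nu_1,\ldots,\nu_k)$ with $0<\nu_1<\cdots<\nu_k$, and let $\tilde N=\operatorname{diag}(N,N)$. Consider the problem of minimizing $f(X)=\operatorname{tr}(\tilde N X^TMX)$ over $X\in\mathbb{R}^{2n\times 2k}$ subject to $X^TJ_{2n}X=J_{2k}$. If $X_*$ is a critical point of this problem, then for every $K\in\mathbb{R}^{2k\times 2k}$ with $K^TJ_{2k}K=J_{2k}$ and $K^T\tilde N K=\tilde N$, the matrix $X_*K$ is also a critical point of this problem.
   Context: $J_{2m}=\begin{bmatrix}0 & I_m\\ -I_m & 0\end{bmatrix}$. A point $X_*\in\mathbb{R}^{2n\times 2k}$ is a critical point of the problem if $X_*^TJ_{2n}X_*=J_{2k}$ and there exists a skew-symmetric matrix $L_*\in\mathbb{R}^{2k\times 2k}$ (Lagrange multiplier) such that $MX_*\tilde N=J_{2n}X_*L_*$. *)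

theory Defs
  imports "Jordan_Normal_Form.Matrix"
begin

definition Jsym :: "nat \<Rightarrow> real mat" where
  "Jsym m = four_block_mat (0\<^sub>m m m) (1\<^sub>m m) (- 1\<^sub>m m) (0\<^sub>m m m)"

definition sym_pos_def_mat :: "nat \<Rightarrow> real mat \<Rightarrow> bool" where
  "sym_pos_def_mat d M \<longleftrightarrow> M \<in> carrier_mat d d \<and> M\<^sup>T = M \<and>
     (\<forall>x \<in> carrier_vec d. x \<noteq> 0\<^sub>v d \<longrightarrow> x \<bullet> (M *\<^sub>v x) > 0)"

definition diag_of :: "nat \<Rightarrow> (nat \<Rightarrow> real) \<Rightarrow> real mat" where
  "diag_of k \<nu> = mat k k (\<lambda>(i, j). if i = j then \<nu> i else 0)"

text \<open>Critical point of  min tr(Nt X^T M X)  s.t.  X^T J_{2n} X = J_{2k}.\<close>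
definition critical_point :: "nat \<Rightarrow> nat \<Rightarrow> real mat \<Rightarrow> real mat \<Rightarrow> real mat \<Rightarrow> bool" where
  "critical_point n k M Nt X \<longleftrightarrow>
     X \<in> carrier_mat (2*n) (2*k) \<and> X\<^sup>T * Jsym n * X = Jsym k \<and>
     (\<exists>L \<in> carrier_mat (2*k) (2*k). L\<^sup>T = - L \<and> M * X * Nt = Jsym n * X * L)"

end

theory Submission
  imports Defs "Jordan_Normal_Form.Determinant"
begin

lemma diag_carrier[simp]: "diag_of k \<nu> \<in> carrier_mat k k" by (simp add: diag_of_def)

lemma mult_diag_right: assumes "P \<in> carrier_mat m k" "i < m" "j < k"
  shows "(P * diag_of k \<nu>) $$ (i,j) = P $$ (i,j) * \<nu> j"
proof -
  have "(P * diag_of k \<nu>) $$ (i,j) = (\<Sum>l\<in>{0..<k}. P $$ (i,l) * (if l = j then \<nu> l else 0))"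
    using assms by (simp add: diag_of_def scalar_prod_def)
  also have "\<dots> = P $$ (i,j) * \<nu> j" using assms(3)
    by (simp add: if_distrib[where f="\<lambda>x. _ * x"] sum.delta' cong: if_cong)
  finally show ?thesis .
qed

lemma mult_diag_left: assumes "P \<in> carrier_mat k m" "i < k" "j < m"
  shows "(diag_of k \<nu> * P) $$ (i,j) = \<nu> i * P $$ (i,j)"
proof -
  have "(diag_of k \<nu> * P) $$ (i,j) = (\<Sum>l\<in>{0..<k}. (if i = l then \<nu> i else 0) * P $$ (l,j))"
    using assms by (simp add: diag_of_def scalar_prod_def)
  also have "\<dots> = \<nu> i * P $$ (i,j)" using assms(2)
    by (simp add: if_distrib[where f="\<lambda>x. x * _"] sum.delta cong: if_cong)
  finally show ?thesis .
qed

lemma four_block_eqD: assumes "four_block_mat A B C D = four_block_mat A' B' C' D'"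
  "A \<in> carrier_mat k k" "B \<in> carrier_mat k k" "C \<in> carrier_mat k k" "D \<in> carrier_mat k k"
  "A' \<in> carrier_mat k k" "B' \<in> carrier_mat k k" "C' \<in> carrier_mat k k" "D' \<in> carrier_mat k k"
  shows "A = A' \<and> B = B' \<and> C = C' \<and> D = D'"
proof -
  let ?F = "four_block_mat A B C D" and ?G = "four_block_mat A' B' C' D'"
  have e: "?F $$ (i,j) = ?G $$ (i,j)" for i j by (simp only: assms(1))
  have "A = A'" proof (rule eq_matI)
    fix i j assume "i < dim_row A'" "j < dim_col A'"
    then show "A $$ (i,j) = A' $$ (i,j)" using e[of i j] assms(2-) by (auto simp: index_mat_four_block)
  qed (use assms in auto)
  moreover have "B = B'" proof (rule eq_matI)
    fix i j assume "i < dim_row B'" "j < dim_col B'"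
    then show "B $$ (i,j) = B' $$ (i,j)" using e[of i "j+k"] assms(2-) by (auto simp: index_mat_four_block)
  qed (use assms in auto)
  moreover have "C = C'" proof (rule eq_matI)
    fix i j assume "i < dim_row C'" "j < dim_col C'"
    then show "C $$ (i,j) = C' $$ (i,j)" using e[of "i+k" j] assms(2-) by (auto simp: index_mat_four_block)
  qed (use assms in auto)
  moreover have "D = D'" proof (rule eq_matI)
    fix i j assume "i < dim_row D'" "j < dim_col D'"
    then show "D $$ (i,j) = D' $$ (i,j)" using e[of "i+k" "j+k"] assms(2-) by (auto simp: index_mat_four_block)
  qed (use assms in auto)
  ultimately show ?thesis by blast
qed

lemma Jsym_carrier[simp]: "Jsym m \<in> carrier_mat (2*m) (2*m)"
proof -
  have "Jsym m \<in> carrier_mat (m+m) (m+m)" unfolding Jsym_def by (rule four_block_carrier_mat) auto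
  then show ?thesis by (simp add: mult_2)
qed

lemma Jsym_sq: "Jsym m * Jsym m = - 1\<^sub>m (2*m)"
proof -
  have "Jsym m * Jsym m = four_block_mat (- 1\<^sub>m m) (0\<^sub>m m m) (0\<^sub>m m m) (- 1\<^sub>m m)"
    unfolding Jsym_def by (subst mult_four_block_mat[of _ m m _ m _ m _ _ m _ m]) auto
  also have "\<dots> = - 1\<^sub>m (2*m)" by (rule eq_matI) (auto simp: index_mat_four_block)
  finally show ?thesis .
qed

lemma Jsym_transpose: "(Jsym m)\<^sup>T = - Jsym m"
  unfolding Jsym_def by (rule eq_matI) (auto simp: index_mat_four_block)

lemma sq_mult_carrier[simp]: "A \<in> carrier_mat n n \<Longrightarrow> B \<in> carrier_mat n n \<Longrightarrow> A * B \<in> carrier_mat n n"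
  by (rule mult_carrier_mat)

lemma sq_assoc: "A \<in> carrier_mat n n \<Longrightarrow> B \<in> carrier_mat n n \<Longrightarrow> C \<in> carrier_mat n n \<Longrightarrow> A * B * C = A * (B * (C::'a::semiring_0 mat))"
  by (rule assoc_mult_mat)

lemma K_comm:
  fixes k :: nat and \<nu> :: "nat \<Rightarrow> real" and K :: "real mat"
  defines "D \<equiv> diag_of k \<nu>"
  defines "Nt \<equiv> four_block_mat D (0\<^sub>m k k) (0\<^sub>m k k) D"
  defines "J \<equiv> Jsym k"
  assumes pos: "\<forall>i<k. 0 < \<nu> i"
    and K: "K \<in> carrier_mat (2*k) (2*k)"
    and KJ: "K\<^sup>T * J * K = J"
    and KN: "K\<^sup>T * Nt * K = Nt"
  shows "K * Nt = Nt * K \<and> K * K\<^sup>T = 1\<^sub>m (2*k)"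
proof -
  have J: "J \<in> carrier_mat (2*k) (2*k)" unfolding J_def by simp
  have D: "D \<in> carrier_mat k k" unfolding D_def by simp
  have Nt: "Nt \<in> carrier_mat (2*k) (2*k)" unfolding Nt_def using D by (simp add: mult_2)
  define T where "T = K\<^sup>T"
  have KT: "T \<in> carrier_mat (2*k) (2*k)" using K unfolding T_def by simp
  have KJ: "T * J * K = J" using KJ unfolding T_def .
  have KN: "T * Nt * K = Nt" using KN unfolding T_def .
  note mc = mult_carrier_mat[OF KT J] mult_carrier_mat[OF J KT] mult_carrier_mat[OF J Nt] mult_carrier_mat[OF KT Nt] mult_carrier_mat[OF Nt K] mult_carrier_mat[OF J K]
  have JJ: "J * J = - 1\<^sub>m (2*k)" unfolding J_def by (rule Jsym_sq)
  define G where "G = - (J * T * J)"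
  have G: "G \<in> carrier_mat (2*k) (2*k)" unfolding G_def using J KT by auto
  have GK: "G * K = 1\<^sub>m (2*k)"
  proof -
    have "G * K = - (J * (T * J * K))" unfolding G_def using J KT K by (simp add: sq_assoc)
    also have "\<dots> = - (J * J)" using KJ by simp
    also have "\<dots> = 1\<^sub>m (2*k)" using JJ by simp
    finally show ?thesis .
  qed
  have KG: "K * G = 1\<^sub>m (2*k)" by (rule mat_mult_left_right_inverse[OF G K GK])
  have GJ: "G * J = J * T"
  proof -
    have "G * J = - (J * T * (J * J))" unfolding G_def using J KT by (simp add: sq_assoc)
    also have "\<dots> = J * T" unfolding JJ using J KT by (simp add: sq_assoc)
    finally show ?thesis .
  qed
  have c1: "G * J * Nt * K = J * Nt"
  proof -
    have "G * J * Nt * K = J * (T * Nt * K)" unfolding GJ using J KT Nt K by (simp add: sq_assoc)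
    then show ?thesis using KN by simp
  qed
  have comm: "J * Nt * K = K * (J * Nt)"
  proof -
    have "J * Nt * K = (K * G) * (J * Nt * K)" unfolding KG using J Nt K by (simp add: sq_assoc)
    also have "\<dots> = K * (G * J * Nt * K)" using K G J Nt by (simp add: sq_assoc)
    finally show ?thesis unfolding c1 .
  qed
  obtain P Q R S where sb: "split_block K k k = (P,Q,R,S)" by (cases "split_block K k k") auto
  have Kd: "dim_row K = k + k" "dim_col K = k + k" using K by auto
  note spl = split_block[OF sb Kd]
  have P: "P \<in> carrier_mat k k" and Q: "Q \<in> carrier_mat k k" and R: "R \<in> carrier_mat k k"
    and S: "S \<in> carrier_mat k k" and Kb: "K = four_block_mat P Q R S" using spl by auto
  have JN: "J * Nt = four_block_mat (0\<^sub>m k k) D (- D) (0\<^sub>m k k)"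
    unfolding J_def Jsym_def Nt_def
    by (subst mult_four_block_mat[of _ k k _ k _ k _ _ k _ k]) (use D in auto)
  have e1: "K * (J * Nt) = four_block_mat (- (Q * D)) (P * D) (- (S * D)) (R * D)"
    unfolding JN Kb
    by (subst mult_four_block_mat[of _ k k _ k _ k _ _ k _ k]) (use D P Q R S in auto)
  have e2: "J * Nt * K = four_block_mat (D * R) (D * S) (- (D * P)) (- (D * Q))"
    unfolding JN Kb
    by (subst mult_four_block_mat[of _ k k _ k _ k _ _ k _ k]) (use D P Q R S in auto)
  have eqs: "- (Q * D) = D * R \<and> P * D = D * S \<and> - (S * D) = - (D * P) \<and> R * D = - (D * Q)"
    by (rule four_block_eqD[of _ _ _ _ _ _ _ _ k]) (use comm e1 e2 D P Q R S in auto)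
  have eqQ: "Q * D = D * (- R)" using eqs D Q R by (metis uminus_uminus_mat uminus_mult_right_mat carrier_matD)
  have eqR: "R * D = D * (- Q)" using eqs D Q R by (metis uminus_mult_right_mat carrier_matD)
  have eqP: "P * D = D * S" using eqs by blast
  have eqS: "S * D = D * P" using eqs by (metis uminus_uminus_mat)
  have ent: "\<And>A B i j. A = B \<Longrightarrow> A $$ (i,j) = B $$ (i,j)" by simp
  have key: "a * y = x * a" if "x > 0" "y > 0" "a * y = x * b" "b * y = x * a" for a b x y :: real
  proof (cases "a = 0")
    case False
    have "a * y * y = x * x * a" using that by (metis mult.assoc mult.commute)
    then have "a * (y - x) * (y + x) = 0" by (simp add: algebra_simps)
    then have "y = x" using False that by auto
    then show ?thesis by simp
  qed simp
  have cX: "X * D = D * X" if X: "X \<in> carrier_mat k k" and Y: "Y \<in> carrier_mat k k"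
    and h1: "X * D = D * Y" and h2: "Y * D = D * X" for X Y
  proof (rule eq_matI)
    fix i j assume ij: "i < dim_row (D * X)" "j < dim_col (D * X)"
    then have ij': "i < k" "j < k" using D X by auto
    have a: "X $$ (i,j) * \<nu> j = \<nu> i * Y $$ (i,j)"
      using ent[OF h1, of i j] ij' X Y
      unfolding D_def by (simp add: mult_diag_left mult_diag_right del: index_mult_mat)
    have b: "Y $$ (i,j) * \<nu> j = \<nu> i * X $$ (i,j)"
      using ent[OF h2, of i j] ij' X Y
      unfolding D_def by (simp add: mult_diag_left mult_diag_right del: index_mult_mat)
    show "(X * D) $$ (i,j) = (D * X) $$ (i,j)"
      using key[OF _ _ a b] pos ij' X unfolding D_def by (simp add: mult_diag_left mult_diag_right del: index_mult_mat)
  qed (use D X in auto)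
  have cP: "P * D = D * P" by (rule cX[OF P S eqP eqS])
  have cS: "S * D = D * S" by (rule cX[OF S P eqS eqP])
  have mR: "(- R) * D = D * Q" using eqR D Q R by (metis uminus_uminus_mat uminus_mult_right_mat uminus_mult_left_mat carrier_matD)
  have mQ: "(- Q) * D = D * R" using eqQ D Q R by (metis uminus_uminus_mat uminus_mult_right_mat uminus_mult_left_mat carrier_matD)
  have cQ: "Q * D = D * Q" by (rule cX[OF Q _ eqQ mR]) (use R in simp)
  have cR: "R * D = D * R" by (rule cX[OF R _ eqR mQ]) (use Q in simp)
  have "K * Nt = four_block_mat (P * D) (Q * D) (R * D) (S * D)"
    unfolding Kb Nt_def
    by (subst mult_four_block_mat[of _ k k _ k _ k _ _ k _ k]) (use D P Q R S in auto)
  also have "\<dots> = four_block_mat (D * P) (D * Q) (D * R) (D * S)" using cP cQ cR cS by simp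
  also have "\<dots> = Nt * K"
    unfolding Kb Nt_def
    by (subst mult_four_block_mat[of _ k k _ k _ k _ _ k _ k]) (use D P Q R S in auto)
  finally have KN': "K * Nt = Nt * K" .
  define Di where "Di = diag_of k (\<lambda>i. 1 / \<nu> i)"
  have Di: "Di \<in> carrier_mat k k" unfolding Di_def by simp
  have DDi: "D * Di = 1\<^sub>m k"
  proof (rule eq_matI)
    fix i j assume "i < dim_row (1\<^sub>m k)" "j < dim_col (1\<^sub>m k)"
    then have ij: "i < k" "j < k" by auto
    show "(D * Di) $$ (i,j) = 1\<^sub>m k $$ (i,j)"
      unfolding D_def mult_diag_left[OF Di ij] using ij pos by (auto simp: Di_def diag_of_def)
  qed (use D Di in auto)
  define Ni where "Ni = four_block_mat Di (0\<^sub>m k k) (0\<^sub>m k k) Di"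
  have Ni: "Ni \<in> carrier_mat (2*k) (2*k)" unfolding Ni_def using Di by (simp add: mult_2)
  have NNi: "Nt * Ni = 1\<^sub>m (2*k)"
  proof -
    have "Nt * Ni = four_block_mat (D * Di) (0\<^sub>m k k) (0\<^sub>m k k) (D * Di)"
      unfolding Nt_def Ni_def
      by (subst mult_four_block_mat[of _ k k _ k _ k _ _ k _ k]) (use D Di in auto)
    also have "\<dots> = 1\<^sub>m (2*k)" unfolding DDi by (simp add: mult_2)
    finally show ?thesis .
  qed
  have "J * K * Nt = K * J * Nt"
  proof -
    have "J * K * Nt = J * (K * Nt)" using J K Nt by (simp add: sq_assoc)
    also have "\<dots> = J * Nt * K" unfolding KN' using J K Nt by (simp add: sq_assoc)
    also have "\<dots> = K * J * Nt" unfolding comm using J K Nt by (simp add: sq_assoc)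
    finally show ?thesis .
  qed
  then have "J * K * Nt * Ni = K * J * Nt * Ni" by simp
  then have JK: "J * K = K * J" using J K Nt Ni NNi by (simp add: sq_assoc)
  have "T * K = 1\<^sub>m (2*k)"
  proof -
    have "T * K = - (T * K * (J * J))" unfolding JJ using KT K by simp
    also have "\<dots> = - (T * (K * J) * J)" using KT K J by (simp add: sq_assoc)
    also have "\<dots> = - ((T * J * K) * J)" unfolding JK[symmetric] using KT K J by (simp add: sq_assoc)
    also have "\<dots> = - (J * J)" unfolding KJ ..
    also have "\<dots> = 1\<^sub>m (2*k)" unfolding JJ by simp
    finally show ?thesis .
  qed
  then have "K * T = 1\<^sub>m (2*k)" by (rule mat_mult_left_right_inverse[OF KT K])
  with KN' show ?thesis unfolding T_def by simp
qed

theorem proposition3p3: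
  fixes n k :: nat and \<nu> :: "nat \<Rightarrow> real" and M X K :: "real mat"
  assumes "1 \<le> k" and "k \<le> n"
    and "sym_pos_def_mat (2*n) M"
    and "\<forall>i<k. 0 < \<nu> i"
    and "\<forall>i j. i < j \<and> j < k \<longrightarrow> \<nu> i < \<nu> j"
    and "critical_point n k M
           (four_block_mat (diag_of k \<nu>) (0\<^sub>m k k) (0\<^sub>m k k) (diag_of k \<nu>)) X"
    and "K \<in> carrier_mat (2*k) (2*k)"
    and "K\<^sup>T * Jsym k * K = Jsym k"
    and "K\<^sup>T * four_block_mat (diag_of k \<nu>) (0\<^sub>m k k) (0\<^sub>m k k) (diag_of k \<nu>) * K
           = four_block_mat (diag_of k \<nu>) (0\<^sub>m k k) (0\<^sub>m k k) (diag_of k \<nu>)"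
  shows "critical_point n k M
           (four_block_mat (diag_of k \<nu>) (0\<^sub>m k k) (0\<^sub>m k k) (diag_of k \<nu>)) (X * K)"
proof -
  define D where "D = diag_of k \<nu>"
  define Nt where "Nt = four_block_mat D (0\<^sub>m k k) (0\<^sub>m k k) D"
  define J where "J = Jsym k"
  define Jn where "Jn = Jsym n"
  note cp = assms(6)[unfolded critical_point_def, folded D_def, folded Nt_def, folded J_def Jn_def]
  have X: "X \<in> carrier_mat (2*n) (2*k)" and XJX: "X\<^sup>T * Jn * X = J" using cp by auto
  obtain L where L: "L \<in> carrier_mat (2*k) (2*k)" and Lskew: "L\<^sup>T = - L"
    and hML: "M * X * Nt = Jn * X * L" using cp by auto
  have K: "K \<in> carrier_mat (2*k) (2*k)" by fact
  have KJ: "K\<^sup>T * J * K = J" using assms(8) unfolding J_def .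
  have KN: "K\<^sup>T * Nt * K = Nt" using assms(9) unfolding Nt_def D_def .
  have kc: "K * Nt = Nt * K \<and> K * K\<^sup>T = 1\<^sub>m (2*k)"
    using K_comm[OF assms(4) K] KJ KN unfolding J_def Nt_def D_def by blast
  define T where "T = K\<^sup>T"
  have T: "T \<in> carrier_mat (2*k) (2*k)" using K unfolding T_def by simp
  have KNc: "K * Nt = Nt * K" and KT1: "K * T = 1\<^sub>m (2*k)" using kc unfolding T_def by auto
  have TJK: "T * J * K = J" using KJ unfolding T_def .
  have M: "M \<in> carrier_mat (2*n) (2*n)" using assms(3) unfolding sym_pos_def_mat_def by auto
  have J: "J \<in> carrier_mat (2*k) (2*k)" unfolding J_def by simp
  have Jn: "Jn \<in> carrier_mat (2*n) (2*n)" unfolding Jn_def by simp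
  have D: "D \<in> carrier_mat k k" unfolding D_def by simp
  have Nt: "Nt \<in> carrier_mat (2*k) (2*k)" unfolding Nt_def using D by (simp add: mult_2)
  have XT: "X\<^sup>T \<in> carrier_mat (2*k) (2*n)" using X by simp
  have XK: "X * K \<in> carrier_mat (2*n) (2*k)" using X K by simp
  have MX: "M * X \<in> carrier_mat (2*n) (2*k)" using M X by simp
  have JnX: "Jn * X \<in> carrier_mat (2*n) (2*k)" using Jn X by simp
  have XTJn: "X\<^sup>T * Jn \<in> carrier_mat (2*k) (2*n)" using XT Jn by simp
  have c2: "(X * K)\<^sup>T * Jn * (X * K) = J"
  proof -
    have "(X * K)\<^sup>T = T * X\<^sup>T" unfolding T_def by (rule transpose_mult[OF X K])
    then have "(X * K)\<^sup>T * Jn * (X * K) = T * (X\<^sup>T * Jn) * (X * K)"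
      using T XT Jn by simp
    also have "\<dots> = T * ((X\<^sup>T * Jn) * (X * K))" by (rule assoc_mult_mat[OF T XTJn XK])
    also have "(X\<^sup>T * Jn) * (X * K) = (X\<^sup>T * Jn * X) * K" by (rule assoc_mult_mat[OF XTJn X K, symmetric])
    also have "T * ((X\<^sup>T * Jn * X) * K) = T * (X\<^sup>T * Jn * X) * K"
      by (rule assoc_mult_mat[OF T mult_carrier_mat[OF XTJn X] K, symmetric])
    also have "\<dots> = J" using XJX TJK by simp
    finally show ?thesis .
  qed
  define L' where "L' = T * L * K"
  have L': "L' \<in> carrier_mat (2*k) (2*k)" unfolding L'_def using T L K by simp
  have L'skew: "L'\<^sup>T = - L'"
  proof -
    have "L'\<^sup>T = K\<^sup>T * (T * L)\<^sup>T" unfolding L'_def by (rule transpose_mult[of _ _ "2*k"]) (use T L K in auto)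
    also have "(T * L)\<^sup>T = L\<^sup>T * T\<^sup>T" by (rule transpose_mult[of _ _ "2*k"]) (use T L in auto)
    finally have "L'\<^sup>T = T * (- L * K)" unfolding Lskew T_def using K L by (simp add: sq_assoc)
    then show ?thesis unfolding L'_def using T L K by (simp add: sq_assoc)
  qed
  have c3: "M * (X * K) * Nt = Jn * (X * K) * L'"
  proof -
    have LK: "L * K \<in> carrier_mat (2*k) (2*k)" using L K by simp
    have TLK: "T * (L * K) \<in> carrier_mat (2*k) (2*k)" using T LK by simp
    have "M * (X * K) * Nt = (M * X * K) * Nt" using assoc_mult_mat[OF M X K] by simp
    also have "\<dots> = (M * X) * (K * Nt)" by (rule assoc_mult_mat[OF MX K Nt])
    also have "\<dots> = (M * X) * (Nt * K)" unfolding KNc ..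
    also have "\<dots> = (M * X * Nt) * K" by (rule assoc_mult_mat[OF MX Nt K, symmetric])
    also have "\<dots> = (Jn * X) * L * K" unfolding hML ..
    also have "\<dots> = (Jn * X) * (L * K)" by (rule assoc_mult_mat[OF JnX L K])
    also have "\<dots> = (Jn * X) * ((K * T) * (L * K))" unfolding KT1 left_mult_one_mat[OF LK] ..
    also have "\<dots> = (Jn * X) * (K * (T * (L * K)))" using assoc_mult_mat[OF K T LK] by simp
    also have "\<dots> = (Jn * X * K) * (T * (L * K))" by (rule assoc_mult_mat[OF JnX K TLK, symmetric])
    also have "\<dots> = Jn * (X * K) * L'" unfolding L'_def
      using assoc_mult_mat[OF Jn X K] assoc_mult_mat[OF T L K] by simp
    finally show ?thesis .
  qed
  show ?thesis unfolding critical_point_def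
    using XK c2 L' L'skew c3 unfolding D_def[symmetric] Nt_def[symmetric] J_def[symmetric] Jn_def[symmetric] by blast
qed

end
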